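(* Let $(Q,\cdot)$ be a quadratical quasigroup, $a,b\in Q$ distinct, and $t$ a positive integer. Then $t1,t3,t4,t2$ are four distinct elements and $t1\cdot t3=t3\cdot t4=t4\cdot t2=t2\cdot t1=aba$; that is, $(t1,t3,t4,t2)$ is a $4$-cycle based on $aba$.
   Context: A quadratical quasigroup is a quasigroup satisfying $xy\cdot x=zx\cdot yz$ (equivalently, a groupoid satisfying $x\cdot x=x$, $yx\cdot xy=x$, $xy\cdot zw=xz\cdot yw$). $aba$ denotes $ab\cdot a$. The elements $tk$ are defined by $11=a$, $12=ab$, $13=ba$, $14=b$ and, for $n\ge2$, $n1=(n-1)1\cdot(n-1)2$, $n2=(n-1)2\cdot(n-1)4$, $n3=(n-1)3\cdot(n-1)1$, $n4=(n-1)4\cdot(n-1)3$. An ($n$-)cycle based on $c$ is a sequence $x_1,\dots,x_n$ of distinct elements with $x_1x_2=x_2x_3=\dots=x_{n-1}x_n=x_nx_1=c$. *)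

theory Defs
  imports Main
begin

definition quasigroup :: "'a set \<Rightarrow> ('a \<Rightarrow> 'a \<Rightarrow> 'a) \<Rightarrow> bool" where
  "quasigroup Q m \<longleftrightarrow>
     (\<forall>x\<in>Q. \<forall>y\<in>Q. m x y \<in> Q) \<and>
     (\<forall>a\<in>Q. \<forall>b\<in>Q. (\<exists>!x. x \<in> Q \<and> m a x = b) \<and> (\<exists>!y. y \<in> Q \<and> m y a = b))"

definition quadratical :: "'a set \<Rightarrow> ('a \<Rightarrow> 'a \<Rightarrow> 'a) \<Rightarrow> bool" where
  "quadratical Q m \<longleftrightarrow> quasigroup Q m \<and>
     (\<forall>x\<in>Q. \<forall>y\<in>Q. \<forall>z\<in>Q. m (m x y) x = m (m z x) (m y z))"

text \<open>The elements tk: tel m a b n = (n1, n2, n3, n4) for n \<ge> 1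
  (index n = 0 is unused and coincides with the case n = 1).\<close>
fun tel :: "('a \<Rightarrow> 'a \<Rightarrow> 'a) \<Rightarrow> 'a \<Rightarrow> 'a \<Rightarrow> nat \<Rightarrow> 'a \<times> 'a \<times> 'a \<times> 'a" where
  "tel m a b 0 = (a, m a b, m b a, b)"
| "tel m a b (Suc 0) = (a, m a b, m b a, b)"
| "tel m a b (Suc (Suc n)) =
     (case tel m a b (Suc n) of (x1, x2, x3, x4) \<Rightarrow>
        (m x1 x2, m x2 x4, m x3 x1, m x4 x3))"

definition t1 where "t1 m a b n = fst (tel m a b n)"
definition t2 where "t2 m a b n = fst (snd (tel m a b n))"
definition t3 where "t3 m a b n = fst (snd (snd (tel m a b n)))"
definition t4 where "t4 m a b n = snd (snd (snd (tel m a b n)))"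

definition cycle_based_on :: "('a \<Rightarrow> 'a \<Rightarrow> 'a) \<Rightarrow> 'a list \<Rightarrow> 'a \<Rightarrow> bool" where
  "cycle_based_on m xs c \<longleftrightarrow> xs \<noteq> [] \<and> distinct xs \<and>
     (\<forall>i < length xs. m (xs ! i) (xs ! ((i + 1) mod length xs)) = c)"

end

theory Submission
  imports Defs
begin

lemma qq_closed: "quadratical Q m \<Longrightarrow> x \<in> Q \<Longrightarrow> y \<in> Q \<Longrightarrow> m x y \<in> Q"
  unfolding quadratical_def quasigroup_def by blast

lemma qq_div: assumes "quadratical Q m" "a \<in> Q" "b \<in> Q"
  shows "(\<exists>!x. x \<in> Q \<and> m a x = b) \<and> (\<exists>!y. y \<in> Q \<and> m y a = b)"
proof -
  have "quasigroup Q m" using assms(1) unfolding quadratical_def by (rule conjunct1)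
  then have "\<forall>a\<in>Q. \<forall>b\<in>Q. (\<exists>!x. x \<in> Q \<and> m a x = b) \<and> (\<exists>!y. y \<in> Q \<and> m y a = b)"
    unfolding quasigroup_def by (rule conjunct2)
  from bspec[OF bspec[OF this assms(2)] assms(3)] show ?thesis .
qed

lemma qq_lcancel: "quadratical Q m \<Longrightarrow> a \<in> Q \<Longrightarrow> x \<in> Q \<Longrightarrow> y \<in> Q \<Longrightarrow> m a x = m a y \<Longrightarrow> x = y"
proof -
  assume h: "quadratical Q m" "a \<in> Q" "x \<in> Q" "y \<in> Q" "m a x = m a y"
  have b: "m a x \<in> Q" by (rule qq_closed[OF h(1,2,3)])
  have "\<exists>!z. z \<in> Q \<and> m a z = m a x" using qq_div[OF h(1,2) b] by (rule conjunct1)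
  then obtain z where z: "\<forall>w. w \<in> Q \<and> m a w = m a x \<longrightarrow> w = z" by (rule ex1E) (rule that)
  have "x = z" using z[rule_format, OF conjI[OF h(3) refl]] .
  moreover have "y = z" using z[rule_format, OF conjI[OF h(4) h(5)[symmetric]]] .
  ultimately show "x = y" by (rule trans_sym)
qed
lemma qq_rcancel: "quadratical Q m \<Longrightarrow> a \<in> Q \<Longrightarrow> x \<in> Q \<Longrightarrow> y \<in> Q \<Longrightarrow> m x a = m y a \<Longrightarrow> x = y"
proof -
  assume h: "quadratical Q m" "a \<in> Q" "x \<in> Q" "y \<in> Q" "m x a = m y a"
  have b: "m x a \<in> Q" by (rule qq_closed[OF h(1,3,2)])
  have "\<exists>!z. z \<in> Q \<and> m z a = m x a" using qq_div[OF h(1,2) b] by (rule conjunct2)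
  then obtain z where z: "\<forall>w. w \<in> Q \<and> m w a = m x a \<longrightarrow> w = z" by (rule ex1E) (rule that)
  have "x = z" using z[rule_format, OF conjI[OF h(3) refl]] .
  moreover have "y = z" using z[rule_format, OF conjI[OF h(4) h(5)[symmetric]]] .
  ultimately show "x = y" by (rule trans_sym)
qed

lemma qq_A: "quadratical Q m \<Longrightarrow> x \<in> Q \<Longrightarrow> y \<in> Q \<Longrightarrow> z \<in> Q \<Longrightarrow>
   m (m x y) x = m (m z x) (m y z)"
  unfolding quadratical_def by blast

lemma qq_idem: assumes q: "quadratical Q m" and x: "x \<in> Q" shows "m x x = x"
proof -
  have xx: "m x x \<in> Q" using qq_closed[OF q x x] .
  have "m (m x x) x = m (m x x) (m x x)" using qq_A[OF q x x x] .
  then show ?thesis using qq_lcancel[OF q xx x xx] by simp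
qed

lemma qq_flex: assumes q: "quadratical Q m" and x: "x \<in> Q" and y: "y \<in> Q"
  shows "m (m x y) x = m x (m y x)"
  using qq_A[OF q x y x] qq_idem[OF q x] by simp

lemma qq_E: assumes q: "quadratical Q m" and x: "x \<in> Q" and y: "y \<in> Q"
  shows "m (m y x) (m x y) = x"
  using qq_A[OF q x x y] qq_idem[OF q x] by simp

lemma qq_comm: assumes q: "quadratical Q m" and x: "x \<in> Q" and y: "y \<in> Q"
  and "m x y = m y x" shows "x = y"
  using qq_E[OF q x y] qq_E[OF q y x] assms(4) by simp

lemma qq_54: assumes q: "quadratical Q m" and x: "x \<in> Q" and y: "y \<in> Q"
  shows "m x (m y x) = m (m y x) y"
proof -
  have yx: "m y x \<in> Q" and xy: "m x y \<in> Q" using qq_closed[OF q y x] qq_closed[OF q x y] by auto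
  have "m (m (m y x) (m x y)) (m y x) = m (m y x) (m (m x y) (m y x))"
    using qq_flex[OF q yx xy] .
  then show ?thesis using qq_E[OF q x y] qq_E[OF q y x] by simp
qed

lemma qq_M3: assumes q: "quadratical Q m" and x: "x \<in> Q" and y: "y \<in> Q" and z: "z \<in> Q"
  shows "m (m x y) (m z x) = m (m x z) (m y x)"
proof -
  have "m (m x y) (m z x) = m (m y z) y" using qq_A[OF q y z x] by simp
  also have "\<dots> = m y (m z y)" using qq_flex[OF q y z] .
  also have "\<dots> = m (m z y) z" using qq_54[OF q y z] .
  also have "\<dots> = m (m x z) (m y x)" using qq_A[OF q z y x] .
  finally show ?thesis .
qed

definition inv4 where
  "inv4 Q m c p q r s \<longleftrightarrow> p \<in> Q \<and> q \<in> Q \<and> r \<in> Q \<and> s \<in> Q \<and>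
     m p q = c \<and> m q r = c \<and> m r s = c \<and> m s p = c \<and> \<not> (p = q \<and> q = r \<and> r = s)"

lemma adj: assumes q: "quadratical Q m" and c: "c \<in> Q"
  and "p \<in> Q" "q \<in> Q" "r \<in> Q" "s \<in> Q"
  and "m p q = c" "m q r = c" "m r s = c" "m s p = c" "p = q"
  shows "p = q \<and> q = r \<and> r = s"
proof -
  have "m p p = c" using assms(7,11) by simp
  then have pc: "p = c" using qq_idem[OF q assms(3)] by simp
  have "m c r = m c c" using assms pc qq_idem[OF q c] by simp
  then have rc: "r = c" using qq_lcancel[OF q c] assms by blast
  have "m c s = m c c" using assms rc qq_idem[OF q c] by simp
  then have "s = c" using qq_lcancel[OF q c] assms by blast
  then show ?thesis using pc rc assms by simp
qed

lemma opp: assumes q: "quadratical Q m" and c: "c \<in> Q"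
  and "p \<in> Q" "q \<in> Q" "r \<in> Q" "s \<in> Q"
  and "m p q = c" "m q r = c" "m r s = c" "m s p = c" "p = r"
  shows "p = q"
  using qq_comm[OF q, of p q] assms by simp

lemma inv4_distinct: assumes q: "quadratical Q m" and c: "c \<in> Q" and i: "inv4 Q m c p q r s"
  shows "distinct [p, q, r, s]"
proof -
  note h = i[unfolded inv4_def]
  have 1: "p \<noteq> q" using adj[OF q c, of p q r s] h by blast
  have 2: "q \<noteq> r" using adj[OF q c, of q r s p] h by blast
  have 3: "r \<noteq> s" using adj[OF q c, of r s p q] h by blast
  have 4: "s \<noteq> p" using adj[OF q c, of s p q r] h by blast
  have 5: "p \<noteq> r" using opp[OF q c, of p q r s] h 1 by blast
  have 6: "q \<noteq> s" using opp[OF q c, of q r s p] h 2 by blast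
  show ?thesis using 1 2 3 4 5 6 by auto
qed

lemma inv4_step: assumes q: "quadratical Q m" and c: "c \<in> Q"
  and i: "inv4 Q m c x1 x3 x4 x2"
  shows "inv4 Q m c (m x1 x2) (m x3 x1) (m x4 x3) (m x2 x4)"
proof -
  note h = i[unfolded inv4_def]
  have Q: "x1 \<in> Q" "x2 \<in> Q" "x3 \<in> Q" "x4 \<in> Q" using h by auto
  have cc: "m c c = c" using qq_idem[OF q c] .
  have e1: "m (m x1 x2) (m x3 x1) = c" using qq_M3[OF q Q(1) Q(2) Q(3)] h cc by simp
  have e2: "m (m x3 x1) (m x4 x3) = c" using qq_M3[OF q Q(3) Q(1) Q(4)] h cc by simp
  have e3: "m (m x4 x3) (m x2 x4) = c" using qq_M3[OF q Q(4) Q(3) Q(2)] h cc by simp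
  have e4: "m (m x2 x4) (m x1 x2) = c" using qq_M3[OF q Q(2) Q(4) Q(1)] h cc by simp
  have ne: "\<not> (m x1 x2 = m x3 x1 \<and> m x3 x1 = m x4 x3 \<and> m x4 x3 = m x2 x4)"
  proof
    assume a: "m x1 x2 = m x3 x1 \<and> m x3 x1 = m x4 x3 \<and> m x4 x3 = m x2 x4"
    have x12: "m x1 x2 \<in> Q" using qq_closed[OF q Q(1) Q(2)] .
    have "m (m x1 x2) (m x1 x2) = c" using e4 a by simp
    then have ec: "m x1 x2 = c" using qq_idem[OF q x12] by simp
    have "m x1 x2 = m x2 x1" using ec h by simp
    then have x1x2: "x1 = x2" using qq_comm[OF q Q(1) Q(2)] by simp
    then have x1c: "x1 = c" using h qq_idem[OF q Q(1)] by simp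
    have "m x4 c = m c c" using h x1x2 x1c cc by simp
    then have x4c: "x4 = c" using qq_rcancel[OF q c Q(4) c] by simp
    have "m x3 c = m c c" using h x4c cc by simp
    then have x3c: "x3 = c" using qq_rcancel[OF q c Q(3) c] by simp
    show False using h x1c x1x2 x3c x4c by simp
  qed
  show ?thesis unfolding inv4_def using e1 e2 e3 e4 ne qq_closed[OF q Q(1) Q(2)] qq_closed[OF q Q(3) Q(1)]
    qq_closed[OF q Q(4) Q(3)] qq_closed[OF q Q(2) Q(4)] by simp
qed

lemma inv4_all: assumes q: "quadratical Q m" and a: "a \<in> Q" and b: "b \<in> Q" and ab: "a \<noteq> b"
  shows "inv4 Q m (m (m a b) a) (t1 m a b (Suc n)) (t3 m a b (Suc n)) (t4 m a b (Suc n)) (t2 m a b (Suc n))"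
proof (induction n)
  case 0
  have c: "m (m a b) a = m (m b a) b" using qq_A[OF q a b b] qq_idem[OF q b] by simp
  have d: "m a (m b a) = m (m a b) a" using qq_flex[OF q a b] by simp
  have e: "m b (m a b) = m (m a b) a" using qq_54[OF q b a] by simp
  have "\<not> (a = m b a \<and> m b a = b)" using ab by auto
  then show ?case unfolding inv4_def t1_def t2_def t3_def t4_def
    using c d e a b qq_closed[OF q a b] qq_closed[OF q b a] by auto
next
  case (Suc n)
  have cQ: "m (m a b) a \<in> Q" using qq_closed[OF q qq_closed[OF q a b] a] .
  have s: "tel m a b (Suc (Suc n)) = (m (t1 m a b (Suc n)) (t2 m a b (Suc n)),
     m (t2 m a b (Suc n)) (t4 m a b (Suc n)), m (t3 m a b (Suc n)) (t1 m a b (Suc n)),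
     m (t4 m a b (Suc n)) (t3 m a b (Suc n)))"
    unfolding t1_def t2_def t3_def t4_def by (simp split: prod.split)
  show ?case using inv4_step[OF q cQ Suc] s unfolding t1_def t2_def t3_def t4_def by simp
qed

theorem proposition3p11:
  fixes Q :: "'a set" and m :: "'a \<Rightarrow> 'a \<Rightarrow> 'a" and a b :: 'a and t :: nat
  assumes "quadratical Q m" and "a \<in> Q" and "b \<in> Q" and "a \<noteq> b" and "t \<ge> 1"
  shows "distinct [t1 m a b t, t3 m a b t, t4 m a b t, t2 m a b t]
       \<and> m (t1 m a b t) (t3 m a b t) = m (m a b) a
       \<and> m (t3 m a b t) (t4 m a b t) = m (m a b) a
       \<and> m (t4 m a b t) (t2 m a b t) = m (m a b) a
       \<and> m (t2 m a b t) (t1 m a b t) = m (m a b) a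
       \<and> cycle_based_on m [t1 m a b t, t3 m a b t, t4 m a b t, t2 m a b t] (m (m a b) a)"
proof -
  obtain n where t: "t = Suc n" using assms(5) by (cases t) auto
  have cQ: "m (m a b) a \<in> Q" using qq_closed[OF assms(1) qq_closed[OF assms(1,2,3)] assms(2)] .
  have i: "inv4 Q m (m (m a b) a) (t1 m a b t) (t3 m a b t) (t4 m a b t) (t2 m a b t)"
    using inv4_all[OF assms(1-4)] t by simp
  have d: "distinct [t1 m a b t, t3 m a b t, t4 m a b t, t2 m a b t]"
    using inv4_distinct[OF assms(1) cQ i] .
  define L where "L = [t1 m a b t, t3 m a b t, t4 m a b t, t2 m a b t]"
  have h: "m (t1 m a b t) (t3 m a b t) = m (m a b) a" "m (t3 m a b t) (t4 m a b t) = m (m a b) a"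
    "m (t4 m a b t) (t2 m a b t) = m (m a b) a" "m (t2 m a b t) (t1 m a b t) = m (m a b) a"
    using i unfolding inv4_def by auto
  have "\<forall>i<4. m (L ! i) (L ! ((i + 1) mod 4)) = m (m a b) a"
  proof (intro allI impI)
    fix i :: nat assume "i < 4"
    then have "i = 0 \<or> i = 1 \<or> i = 2 \<or> i = 3" by auto
    then show "m (L ! i) (L ! ((i + 1) mod 4)) = m (m a b) a" using h unfolding L_def by auto
  qed
  then have "cycle_based_on m L (m (m a b) a)" using d unfolding cycle_based_on_def L_def by simp
  then show ?thesis using d h unfolding L_def by simp
qed

end
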